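(* Let $q$ be a prime power, let $F_1\subsetneq F_0\subseteq\mathbb{F}_q^n$ be linear codes, and let $G_E\in\mathbb{F}_q^{e\times n}$ have row space $E$ with $F_0\cap E=\{\underline{0}\}$. In the QSS scheme given by $\mathrm{ECSS}(F_0,F_1,G_E)$, when the combiner has prior access to all $e$ extension qudits, the secret can be recovered from every choice of $\tau$ qudits out of the $n$ original qudits (i.e. $J\cup\{n+1,\dots,n+e\}$ is authorized for every $J\subseteq[n]$ with $|J|=\tau$) if and only if $\tau\geq\tau_e$, where $$\tau_e=n-\min\{\mathrm{wt}(F_0\setminus F_1),\ \mathrm{wt}((F_1+E)^\perp\setminus(F_0+E)^\perp)\}+1.$$
   Context: For linear codes $L_1\subsetneq L_0\subseteq\mathbb{F}_q^n$, $\mathrm{wt}(L_0\setminus L_1)=\min\{\mathrm{wt}(\underline{c}):\underline{c}\in L_0,\ \underline{c}\notin L_1\}$ (Hamming weight); $L^\perp$ is the dual code. Let $F_0,F_1$ have dimensions $f_0,f_1$, and let $G_{F_0}=\begin{bmatrix}G_{F_0/F_1}\\ G_{F_1}\end{bmatrix}$ be a generator matrix of $F_0$ with $G_{F_1}$ generating $F_1$ and $G_{F_0/F_1}$ generating a complement of $F_1$ in $F_0$. The extended CSS code $\mathrm{ECSS}(F_0,F_1,G_E)$ is the CSS code of $C_0$ over $C_1$ where $C_0,C_1\subseteq\mathbb{F}_q^{n+e}$ are generated by $\begin{bmatrix}G_{F_0}&0\\ G_E&I_e\end{bmatrix}$ and $\begin{bmatrix}G_{F_1}&0\\ G_E&I_e\end{bmatrix}$;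 its encoding maps (up to normalization, extended linearly) $|\underline{s}\rangle$, $\underline{s}\in\mathbb{F}_q^{f_0-f_1}$, to $\sum_{\underline{r}_1\in\mathbb{F}_q^{f_1},\underline{r}_2\in\mathbb{F}_q^{e}}|[\,G_{F_0/F_1}^T\ G_{F_1}^T\ G_E^T\,](\underline{s};\underline{r}_1;\underline{r}_2)\rangle|\underline{r}_2\rangle$. The first $n$ qudits are the original qudits and the last $e$ the extension qudits; qudit $j$ is given to party $j\in[n+e]$. A set of parties is authorized if the secret can be recovered from their qudits. *)

theory Defs
  imports Complex_Main
begin

text \<open>Vectors over the finite field 'a are functions nat => 'a; the vectors of F_q^n are
  those supported in {..<n} (coordinate j of the paper is index j-1 here).
  More generally vecs A is the set of functions supported in the index set A; it also serves
  as the computational basis of the qudits indexed by A.\<close>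

definition vecs :: "nat set \<Rightarrow> (nat \<Rightarrow> 'a::zero) set" where
  "vecs A = {v. \<forall>i. i \<notin> A \<longrightarrow> v i = 0}"

definition zerov :: "nat \<Rightarrow> 'a::zero" where
  "zerov = (\<lambda>_. 0)"

definition vadd :: "(nat \<Rightarrow> 'a::plus) \<Rightarrow> (nat \<Rightarrow> 'a) \<Rightarrow> (nat \<Rightarrow> 'a)" where
  "vadd u v = (\<lambda>i. u i + v i)"

definition linear_code :: "nat \<Rightarrow> (nat \<Rightarrow> 'a::field) set \<Rightarrow> bool" where
  "linear_code n L \<longleftrightarrow> L \<subseteq> vecs {..<n} \<and> zerov \<in> L \<and>
     (\<forall>u\<in>L. \<forall>v\<in>L. vadd u v \<in> L) \<and> (\<forall>c. \<forall>v\<in>L. (\<lambda>i. c * v i) \<in> L)"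

text \<open>A matrix is a list of rows; lincomb G c = c^T G (row vector c times G).\<close>

definition lincomb :: "(nat \<Rightarrow> 'a::field) list \<Rightarrow> (nat \<Rightarrow> 'a) \<Rightarrow> (nat \<Rightarrow> 'a)" where
  "lincomb G c = (\<lambda>j. \<Sum>i<length G. c i * (G ! i) j)"

definition row_space :: "(nat \<Rightarrow> 'a::field) list \<Rightarrow> (nat \<Rightarrow> 'a) set" where
  "row_space G = lincomb G ` vecs {..<length G}"

definition rows_indep :: "(nat \<Rightarrow> 'a::field) list \<Rightarrow> bool" where
  "rows_indep G \<longleftrightarrow> (\<forall>c \<in> vecs {..<length G}. lincomb G c = zerov \<longrightarrow> c = zerov)"

definition generator_matrix :: "(nat \<Rightarrow> 'a::field) list \<Rightarrow> (nat \<Rightarrow> 'a) set \<Rightarrow> bool" where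
  "generator_matrix G L \<longleftrightarrow> rows_indep G \<and> row_space G = L"

definition code_sum :: "(nat \<Rightarrow> 'a::plus) set \<Rightarrow> (nat \<Rightarrow> 'a) set \<Rightarrow> (nat \<Rightarrow> 'a) set" where
  "code_sum L M = {vadd u v | u v. u \<in> L \<and> v \<in> M}"

definition dual :: "nat \<Rightarrow> (nat \<Rightarrow> 'a::field) set \<Rightarrow> (nat \<Rightarrow> 'a) set" where
  "dual n L = {v \<in> vecs {..<n}. \<forall>c\<in>L. (\<Sum>i<n. v i * c i) = 0}"

definition hwt :: "nat \<Rightarrow> (nat \<Rightarrow> 'a::zero) \<Rightarrow> nat" where
  "hwt n v = card {i. i < n \<and> v i \<noteq> 0}"

definition wt_diff :: "nat \<Rightarrow> (nat \<Rightarrow> 'a::zero) set \<Rightarrow> (nat \<Rightarrow> 'a) set \<Rightarrow> nat" where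
  "wt_diff n L0 L1 = Min (hwt n ` (L0 - L1))"

definition tau_e :: "nat \<Rightarrow> (nat \<Rightarrow> 'a::field) set \<Rightarrow> (nat \<Rightarrow> 'a) set \<Rightarrow> (nat \<Rightarrow> 'a) set \<Rightarrow> nat" where
  "tau_e n F0 F1 E = n + 1 - min (wt_diff n F0 F1)
       (wt_diff n (dual n (code_sum F1 E)) (dual n (code_sum F0 E)))"

text \<open>Qudits are indexed 0..<n (original) and n..<n+e (extension).\<close>

definition ecss_word :: "nat \<Rightarrow> (nat \<Rightarrow> 'a::field) list \<Rightarrow> (nat \<Rightarrow> 'a) list \<Rightarrow> (nat \<Rightarrow> 'a) list
    \<Rightarrow> (nat \<Rightarrow> 'a) \<Rightarrow> (nat \<Rightarrow> 'a) \<Rightarrow> (nat \<Rightarrow> 'a) \<Rightarrow> (nat \<Rightarrow> 'a)" where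
  "ecss_word n G01 G1 GE s r1 r2 = (\<lambda>i.
      if i < n then lincomb G01 s i + lincomb G1 r1 i + lincomb GE r2 i
      else if i < n + length GE then r2 (i - n) else 0)"

text \<open>Amplitude of basis state x in the (normalized) encoding of basis secret |s>.\<close>
definition ecss_amp :: "nat \<Rightarrow> (nat \<Rightarrow> 'a::{finite,field}) list \<Rightarrow> (nat \<Rightarrow> 'a) list \<Rightarrow> (nat \<Rightarrow> 'a) list
    \<Rightarrow> (nat \<Rightarrow> 'a) \<Rightarrow> (nat \<Rightarrow> 'a) \<Rightarrow> complex" where
  "ecss_amp n G01 G1 GE s x =
     of_nat (card {(r1, r2). r1 \<in> vecs {..<length G1} \<and> r2 \<in> vecs {..<length GE} \<and>
                             ecss_word n G01 G1 GE s r1 r2 = x})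
     / of_real (sqrt (real (card (UNIV :: 'a set) ^ (length G1 + length GE))))"

definition ecss_encode :: "nat \<Rightarrow> (nat \<Rightarrow> 'a::{finite,field}) list \<Rightarrow> (nat \<Rightarrow> 'a) list \<Rightarrow> (nat \<Rightarrow> 'a) list
    \<Rightarrow> ((nat \<Rightarrow> 'a) \<Rightarrow> complex) \<Rightarrow> (nat \<Rightarrow> 'a) \<Rightarrow> complex" where
  "ecss_encode n G01 G1 GE psi x =
     (\<Sum>s\<in>vecs {..<length G01}. psi s * ecss_amp n G01 G1 GE s x)"

text \<open>Reduced density matrix on the qudits in A of the pure state Phi of N qudits
  (partial trace over {..<N} - A); entries indexed by x, y in vecs A.\<close>
definition reduced_state :: "nat \<Rightarrow> nat set \<Rightarrow> ((nat \<Rightarrow> 'a::{finite,zero,plus}) \<Rightarrow> complex)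
    \<Rightarrow> (nat \<Rightarrow> 'a) \<Rightarrow> (nat \<Rightarrow> 'a) \<Rightarrow> complex" where
  "reduced_state N A Phi x y =
     (\<Sum>z\<in>vecs ({..<N} - A). Phi (vadd x z) * cnj (Phi (vadd y z)))"

text \<open>Quantum channel from the qudits in A to the secret system with basis B, given by a
  finite list of Kraus operators K(s, x) (s in B, x in vecs A); trace preserving condition.\<close>
definition kraus_tp :: "nat set \<Rightarrow> (nat \<Rightarrow> 'a::{finite,zero}) set
    \<Rightarrow> ((nat \<Rightarrow> 'a) \<Rightarrow> (nat \<Rightarrow> 'a) \<Rightarrow> complex) list \<Rightarrow> bool" where
  "kraus_tp A B Ks \<longleftrightarrow> (\<forall>x\<in>vecs A. \<forall>y\<in>vecs A.
      (\<Sum>j<length Ks. \<Sum>s\<in>B. cnj ((Ks ! j) s x) * (Ks ! j) s y) = (if x = y then 1 else 0))"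

definition kraus_apply :: "nat set \<Rightarrow> ((nat \<Rightarrow> 'a::{finite,zero}) \<Rightarrow> (nat \<Rightarrow> 'a) \<Rightarrow> complex) list
    \<Rightarrow> ((nat \<Rightarrow> 'a) \<Rightarrow> (nat \<Rightarrow> 'a) \<Rightarrow> complex) \<Rightarrow> (nat \<Rightarrow> 'a) \<Rightarrow> (nat \<Rightarrow> 'a) \<Rightarrow> complex" where
  "kraus_apply A Ks X s t =
     (\<Sum>j<length Ks. \<Sum>x\<in>vecs A. \<Sum>y\<in>vecs A. (Ks ! j) s x * X x y * cnj ((Ks ! j) t y))"

definition ecss_authorized :: "nat \<Rightarrow> (nat \<Rightarrow> 'a::{finite,field}) list \<Rightarrow> (nat \<Rightarrow> 'a) list
    \<Rightarrow> (nat \<Rightarrow> 'a) list \<Rightarrow> nat set \<Rightarrow> bool" where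
  "ecss_authorized n G01 G1 GE A \<longleftrightarrow>
     (\<exists>Ks. kraus_tp A (vecs {..<length G01}) Ks \<and>
        (\<forall>psi. (\<Sum>s\<in>vecs {..<length G01}. (cmod (psi s))\<^sup>2) = 1 \<longrightarrow>
           (\<forall>s\<in>vecs {..<length G01}. \<forall>t\<in>vecs {..<length G01}.
              kraus_apply A Ks (reduced_state (n + length GE) A (ecss_encode n G01 G1 GE psi)) s t
                = psi s * cnj (psi t))))"

end

theory Submission
  imports Defs "HOL-Library.Function_Algebras" "HOL-Library.FuncSet"
begin


lemma vadd_eq: "vadd u v = u + v" by (simp add: vadd_def fun_eq_iff)
lemma zerov_eq: "zerov = 0" by (simp add: zerov_def fun_eq_iff)

lemma vecs_iff: "v \<in> vecs A \<longleftrightarrow> (\<forall>i. i \<notin> A \<longrightarrow> v i = 0)" by (simp add: vecs_def)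
lemma vecs_add: "u \<in> vecs A \<Longrightarrow> v \<in> vecs A \<Longrightarrow> (u::nat\<Rightarrow>'a::monoid_add) + v \<in> vecs A" by (simp add: vecs_def)
lemma vecs_diff: "u \<in> vecs A \<Longrightarrow> v \<in> vecs A \<Longrightarrow> (u::nat\<Rightarrow>'a::ab_group_add) - v \<in> vecs A" by (simp add: vecs_def)
lemma vecs_zero: "0 \<in> vecs A" by (simp add: vecs_def)
lemma vecs_mono: "v \<in> vecs A \<Longrightarrow> A \<subseteq> B \<Longrightarrow> v \<in> vecs B" by (auto simp add: vecs_def)

lemma finite_vecs: "finite A \<Longrightarrow> finite (vecs A :: (nat \<Rightarrow> 'a::{finite,zero}) set)"
proof -
  assume fA: "finite A"
  have "inj_on (\<lambda>v. restrict v A) (vecs A :: (nat \<Rightarrow> 'a) set)"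
    unfolding inj_on_def vecs_def restrict_def fun_eq_iff by (metis (mono_tags, lifting) mem_Collect_eq)
  moreover have "(\<lambda>v. restrict v A) ` (vecs A :: (nat \<Rightarrow> 'a) set) \<subseteq> PiE A (\<lambda>_. UNIV)" by auto
  moreover have "finite (PiE A (\<lambda>_. UNIV :: 'a set))" using fA by (simp add: finite_PiE)
  ultimately show ?thesis by (meson finite_imageD finite_subset)
qed

lemma card_vecs: "finite A \<Longrightarrow> card (vecs A :: (nat \<Rightarrow> 'a::{finite,zero}) set) = card (UNIV :: 'a set) ^ card A"
proof -
  assume fA: "finite A"
  have "bij_betw (\<lambda>v. restrict v A) (vecs A :: (nat \<Rightarrow> 'a) set) (PiE A (\<lambda>_. UNIV))"
    unfolding bij_betw_def
  proof
    show "inj_on (\<lambda>v. restrict v A) (vecs A :: (nat \<Rightarrow> 'a) set)"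
      unfolding inj_on_def vecs_def restrict_def fun_eq_iff by (metis (mono_tags, lifting) mem_Collect_eq)
    show "(\<lambda>v. restrict v A) ` (vecs A :: (nat \<Rightarrow> 'a) set) = PiE A (\<lambda>_. UNIV)"
    proof
      show "(\<lambda>v. restrict v A) ` (vecs A :: (nat \<Rightarrow> 'a) set) \<subseteq> PiE A (\<lambda>_. UNIV)" by auto
      show "PiE A (\<lambda>_. UNIV) \<subseteq> (\<lambda>v. restrict v A) ` (vecs A :: (nat \<Rightarrow> 'a) set)"
      proof
        fix g :: "nat \<Rightarrow> 'a" assume g: "g \<in> PiE A (\<lambda>_. UNIV)"
        define v where "v = (\<lambda>i. if i \<in> A then g i else 0)"
        have "v \<in> vecs A" by (simp add: v_def vecs_def)
        moreover have "restrict v A = g" using g by (auto simp: v_def restrict_def fun_eq_iff PiE_def extensional_def)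
        ultimately show "g \<in> (\<lambda>v. restrict v A) ` vecs A" by blast
      qed
    qed
  qed
  then have "card (vecs A :: (nat \<Rightarrow> 'a) set) = card (PiE A (\<lambda>_. UNIV :: 'a set))" by (rule bij_betw_same_card)
  also have "\<dots> = card (UNIV :: 'a set) ^ card A" using fA by (simp add: card_PiE)
  finally show ?thesis .
qed

lemma sum_single: "finite S \<Longrightarrow> a \<in> S \<Longrightarrow> (\<forall>b\<in>S. b \<noteq> a \<longrightarrow> g b = 0) \<Longrightarrow> sum g S = g a"
  by (metis (mono_tags, lifting) DiffD1 DiffD2 add.right_neutral singletonI sum.neutral sum.remove)

lemma sum_two: "finite S \<Longrightarrow> a \<in> S \<Longrightarrow> b \<in> S \<Longrightarrow> a \<noteq> b \<Longrightarrow> (\<forall>c\<in>S. c \<noteq> a \<and> c \<noteq> b \<longrightarrow> g c = 0) \<Longrightarrow> sum g S = g a + g b"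
proof -
  assume *: "finite S" "a \<in> S" "b \<in> S" "a \<noteq> b" "\<forall>c\<in>S. c \<noteq> a \<and> c \<noteq> b \<longrightarrow> g c = 0"
  have "sum g S = sum g {a, b}" using * by (intro sum.mono_neutral_right) auto
  then show ?thesis using *(4) by simp
qed

lemma lincomb_add: "lincomb G (a + b) = lincomb G a + lincomb G b"
  by (simp add: lincomb_def fun_eq_iff distrib_right sum.distrib)
lemma lincomb_diff: "lincomb G (a - b) = lincomb G a - lincomb G b"
  by (simp add: lincomb_def fun_eq_iff left_diff_distrib sum_subtractf)
lemma lincomb_zero: "lincomb G 0 = 0"
  by (simp add: lincomb_def fun_eq_iff)
lemma lincomb_scale: "lincomb G (\<lambda>i. c * a i) = (\<lambda>j. c * lincomb G a j)"
  by (simp add: lincomb_def fun_eq_iff sum_distrib_left mult.assoc)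
lemma lincomb_cong: "(\<And>i. i < length G \<Longrightarrow> a i = b i) \<Longrightarrow> lincomb G a = lincomb G b"
  by (simp add: lincomb_def)
lemma sum_split_add: "(\<Sum>i<a+b. g i) = (\<Sum>i<a. g i) + (\<Sum>i<b. g (a + i))" for a b :: nat
proof -
  have "{..<a+b} = {..<a} \<union> {a..<a+b}" by auto
  then have "(\<Sum>i<a+b. g i) = (\<Sum>i<a. g i) + (\<Sum>i\<in>{a..<a+b}. g i)"
    by (metis sum.union_disjoint finite_lessThan finite_atLeastLessThan ivl_disj_int_one(2))
  moreover have "(\<Sum>i\<in>{a..<a+b}. g i) = (\<Sum>i<b. g (a + i))"
    using sum.atLeastLessThan_shift_bounds[of g 0 a b] by (simp add: atLeast0LessThan comp_def add.commute)
  ultimately show ?thesis by simp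
qed

lemma lincomb_append: "lincomb (G @ H) d = lincomb G d + lincomb H (\<lambda>i. d (length G + i))"
proof (rule ext)
  fix j
  have "(\<Sum>i<length (G @ H). d i * ((G @ H) ! i) j)
      = (\<Sum>i<length G. d i * ((G @ H) ! i) j) + (\<Sum>i<length H. d (length G + i) * ((G @ H) ! (length G + i)) j)"
    by (simp add: sum_split_add)
  also have "\<dots> = (\<Sum>i<length G. d i * (G ! i) j) + (\<Sum>i<length H. d (length G + i) * (H ! i) j)"
    by (simp add: nth_append)
  finally show "lincomb (G @ H) d j = (lincomb G d + lincomb H (\<lambda>i. d (length G + i))) j"
    by (simp add: lincomb_def)
qed

lemma lincomb_in_vecs: "set G \<subseteq> vecs I \<Longrightarrow> lincomb G c \<in> vecs I"
  unfolding vecs_def lincomb_def by (auto intro!: sum.neutral dest!: nth_mem)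

locale ecss =
  fixes n :: nat and G01 G1 GE :: "(nat \<Rightarrow> 'a::{finite,field}) list" and F0 F1 :: "(nat \<Rightarrow> 'a) set"
  assumes lc0: "linear_code n F0" and lc1: "linear_code n F1" and sub: "F1 \<subset> F0"
   and gm1: "generator_matrix G1 F1" and gm0: "generator_matrix (G01 @ G1) F0"
   and GEv: "set GE \<subseteq> vecs {..<n}" and inter: "F0 \<inter> row_space GE = {zerov}"
begin

abbreviation "k \<equiv> length G01"
abbreviation "f \<equiv> length G1"
abbreviation "e \<equiv> length GE"
abbreviation "word \<equiv> ecss_word n G01 G1 GE"

definition W where "W s = {word s r1 r2 | r1 r2. r1 \<in> vecs {..<f} \<and> r2 \<in> vecs {..<e}}"
definition kap :: complex where
  "kap = 1 / of_real (sqrt (real (card (UNIV::'a set) ^ (f + e))))"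

lemma F0v: "F0 \<subseteq> vecs {..<n}" using lc0 by (simp add: linear_code_def)
lemma F1v: "F1 \<subseteq> vecs {..<n}" using lc1 by (simp add: linear_code_def)

lemma G1_in: "lincomb G1 r \<in> F1"
proof -
  have "lincomb G1 r = lincomb G1 (\<lambda>i. if i < f then r i else 0)" by (rule lincomb_cong) simp
  moreover have "(\<lambda>i. if i < f then r i else 0) \<in> vecs {..<f}" by (simp add: vecs_def)
  ultimately show ?thesis using gm1 by (auto simp: generator_matrix_def row_space_def)
qed

lemma G0_in: "lincomb (G01 @ G1) r \<in> F0"
proof -
  have "lincomb (G01 @ G1) r = lincomb (G01 @ G1) (\<lambda>i. if i < k + f then r i else 0)" by (rule lincomb_cong) simp
  moreover have "(\<lambda>i. if i < k + f then r i else 0) \<in> vecs {..<k+f}" by (simp add: vecs_def)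
  ultimately show ?thesis using gm0 by (auto simp: generator_matrix_def row_space_def)
qed

lemma G01_in: "lincomb G01 s \<in> F0"
proof -
  have z: "(\<lambda>i. (\<lambda>i. if i < k then s i else 0) (k + i)) = 0" by (simp add: fun_eq_iff)
  have "lincomb (G01 @ G1) (\<lambda>i. if i < k then s i else 0) = lincomb G01 (\<lambda>i. if i < k then s i else 0)"
    unfolding lincomb_append z lincomb_zero by simp
  also have "\<dots> = lincomb G01 s" by (rule lincomb_cong) simp
  finally have "lincomb (G01 @ G1) (\<lambda>i. if i < k then s i else 0) = lincomb G01 s" .
  then show ?thesis using G0_in by metis
qed

lemma GE_in: "lincomb GE r \<in> row_space GE"
proof -
  have "lincomb GE r = lincomb GE (\<lambda>i. if i < e then r i else 0)" by (rule lincomb_cong) simp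
  moreover have "(\<lambda>i. if i < e then r i else 0) \<in> vecs {..<e}" by (simp add: vecs_def)
  ultimately show ?thesis by (auto simp: row_space_def)
qed

lemma G01_v: "lincomb G01 s \<in> vecs {..<n}" using G01_in F0v by blast
lemma G1_v: "lincomb G1 s \<in> vecs {..<n}" using G1_in F1v by blast
lemma GE_v: "lincomb GE s \<in> vecs {..<n}" using GEv by (rule lincomb_in_vecs)

lemma F0_split:
  assumes "c \<in> F0"
  obtains d1 d2 where "d1 \<in> vecs {..<k}" "d2 \<in> vecs {..<f}" "c = lincomb G01 d1 + lincomb G1 d2"
proof -
  obtain d where d: "d \<in> vecs {..<k+f}" "c = lincomb (G01 @ G1) d"
    using assms gm0 by (auto simp: generator_matrix_def row_space_def)
  define d1 where "d1 = (\<lambda>i. if i < k then d i else 0)"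
  define d2 where "d2 = (\<lambda>i. d (k + i))"
  have "d1 \<in> vecs {..<k}" by (simp add: d1_def vecs_def)
  moreover have "d2 \<in> vecs {..<f}" using d(1) by (simp add: d2_def vecs_def)
  moreover have "c = lincomb G01 d1 + lincomb G1 d2"
    using d(2) by (simp add: lincomb_append d1_def d2_def cong: lincomb_cong)
  ultimately show ?thesis using that by blast
qed

lemma indep0:
  assumes "a \<in> vecs {..<k}" "b \<in> vecs {..<f}" "lincomb G01 a + lincomb G1 b = 0"
  shows "a = 0"
proof -
  define d where "d = (\<lambda>i. if i < k then a i else b (i - k))"
  have dv: "d \<in> vecs {..<k+f}" using assms(1,2) by (auto simp: d_def vecs_def)
  have "lincomb (G01 @ G1) d = lincomb G01 a + lincomb G1 b"
    by (simp add: lincomb_append d_def cong: lincomb_cong)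
  then have "d = 0" using gm0 dv assms(3) by (simp add: generator_matrix_def rows_indep_def zerov_eq)
  show "a = 0"
  proof
    fix i show "a i = 0 i"
    proof (cases "i < k")
      case True
      then show ?thesis using fun_cong[OF \<open>d = 0\<close>, of i] by (simp add: d_def)
    next
      case False
      then show ?thesis using assms(1) by (simp add: vecs_def)
    qed
  qed
qed

lemma indep1:
  assumes "b \<in> vecs {..<f}" "lincomb G1 b = 0"
  shows "b = 0"
  using gm1 assms by (simp add: generator_matrix_def rows_indep_def zerov_eq)

lemma word_add: "word s r1 r2 + word s' r1' r2' = word (s + s') (r1 + r1') (r2 + r2')"
  by (simp add: ecss_word_def fun_eq_iff lincomb_add)
lemma word_diff: "word s r1 r2 - word s' r1' r2' = word (s - s') (r1 - r1') (r2 - r2')"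
  by (simp add: ecss_word_def fun_eq_iff lincomb_diff)

lemma word_v: "word s r1 r2 \<in> vecs {..<n+e}"
  by (simp add: ecss_word_def vecs_def)

lemma word_eq0:
  assumes "s \<in> vecs {..<k}" "r1 \<in> vecs {..<f}" "r2 \<in> vecs {..<e}" "word s r1 r2 = 0"
  shows "s = 0 \<and> r1 = 0 \<and> r2 = 0"
proof -
  have r2: "r2 = 0"
  proof
    fix i show "r2 i = 0 i"
    proof (cases "i < e")
      case True
      then show ?thesis using fun_cong[OF assms(4), of "n+i"] by (simp add: ecss_word_def)
    next
      case False
      then show ?thesis using assms(3) by (simp add: vecs_def)
    qed
  qed
  have "lincomb G01 s + lincomb G1 r1 = 0"
  proof
    fix i show "(lincomb G01 s + lincomb G1 r1) i = 0 i"
    proof (cases "i < n")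
      case True
      then show ?thesis using fun_cong[OF assms(4), of i] r2 by (simp add: ecss_word_def lincomb_zero)
    next
      case False
      then show ?thesis using G01_v[of s] G1_v[of r1] by (simp add: vecs_def)
    qed
  qed
  then have s: "s = 0" using indep0 assms(1,2) by blast
  then have "lincomb G1 r1 = 0" using \<open>lincomb G01 s + lincomb G1 r1 = 0\<close> by (simp add: lincomb_zero)
  then have "r1 = 0" using indep1 assms(2) by blast
  then show ?thesis using s r2 by simp
qed

lemma word_inj:
  assumes "r1 \<in> vecs {..<f}" "r2 \<in> vecs {..<e}" "r1' \<in> vecs {..<f}" "r2' \<in> vecs {..<e}"
    "word s r1 r2 = word s r1' r2'"
  shows "r1 = r1' \<and> r2 = r2'"
proof -
  have "word (s - s) (r1 - r1') (r2 - r2') = 0" using assms(5) word_diff by (metis diff_self)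
  then have "r1 - r1' = 0 \<and> r2 - r2' = 0"
    using word_eq0[of "s - s" "r1 - r1'" "r2 - r2'"] assms(1-4) by (simp add: vecs_zero vecs_diff)
  then show ?thesis by simp
qed

lemma amp_char: "ecss_amp n G01 G1 GE s x = (if x \<in> W s then kap else 0)"
proof -
  let ?S = "{(r1, r2). r1 \<in> vecs {..<f} \<and> r2 \<in> vecs {..<e} \<and> word s r1 r2 = x}"
  have "card ?S = (if x \<in> W s then 1 else 0)"
  proof (cases "x \<in> W s")
    case True
    then obtain a b where ab: "a \<in> vecs {..<f}" "b \<in> vecs {..<e}" "x = word s a b" by (auto simp: W_def)
    have "?S = {(a, b)}" using ab word_inj[of _ _ a b s] by auto
    then show ?thesis using True by simp
  next
    case False
    then have "?S = {}" by (auto simp: W_def)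
    then show ?thesis using False by (metis (no_types, lifting) card.empty)
  qed
  then show ?thesis by (simp add: ecss_amp_def kap_def)
qed

lemma W_v: "W s \<subseteq> vecs {..<n+e}" using word_v by (auto simp: W_def)

lemma finite_W: "finite (W s)" using W_v finite_vecs[of "{..<n+e}"] finite_subset by blast

lemma W_shift:
  assumes "w0 \<in> W s"
  shows "w \<in> W s \<longleftrightarrow> w - w0 \<in> W 0"
proof -
  obtain a b where ab: "a \<in> vecs {..<f}" "b \<in> vecs {..<e}" "w0 = word s a b" using assms by (auto simp: W_def)
  show ?thesis
  proof
    assume "w \<in> W s"
    then obtain c d where cd: "c \<in> vecs {..<f}" "d \<in> vecs {..<e}" "w = word s c d" by (auto simp: W_def)
    have "w - w0 = word 0 (c - a) (d - b)" using cd ab word_diff by (metis diff_self)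
    then show "w - w0 \<in> W 0" using cd ab by (auto simp: W_def intro!: vecs_diff)
  next
    assume "w - w0 \<in> W 0"
    then obtain c d where cd: "c \<in> vecs {..<f}" "d \<in> vecs {..<e}" "w - w0 = word 0 c d" by (auto simp: W_def)
    have "w = word (0 + s) (c + a) (d + b)" using cd ab word_add by (metis diff_add_cancel)
    then show "w \<in> W s" using cd ab by (auto simp: W_def intro!: vecs_add)
  qed
qed

lemma card_W0: "card (W 0) = card (UNIV :: 'a set) ^ (f + e)"
proof -
  have Wi: "W 0 = (\<lambda>(r1, r2). word 0 r1 r2) ` (vecs {..<f} \<times> vecs {..<e})" by (auto simp: W_def)
  have inj: "inj_on (\<lambda>(r1, r2). word 0 r1 r2) (vecs {..<f} \<times> vecs {..<e})"
    using word_inj by (auto simp: inj_on_def)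
  have "card (W 0) = card ((vecs {..<f} :: (nat \<Rightarrow> 'a) set) \<times> (vecs {..<e} :: (nat \<Rightarrow> 'a) set))"
    unfolding Wi by (rule card_image[OF inj])
  also have "\<dots> = card (UNIV :: 'a set) ^ f * card (UNIV :: 'a set) ^ e"
    by (simp add: card_cartesian_product card_vecs)
  finally show ?thesis by (simp add: power_add)
qed

lemma kap_sq: "kap * cnj kap * of_nat (card (W 0)) = 1"
proof -
  define Q where "Q = real (card (UNIV :: 'a set) ^ (f + e))"
  have "0 < card (UNIV :: 'a set)" by (simp add: card_gt_0_iff)
  then have Qp: "Q > 0" by (simp add: Q_def)
  have kq: "kap = complex_of_real (1 / sqrt Q)" by (simp add: kap_def Q_def)
  have "(1 / sqrt Q) * (1 / sqrt Q) * Q = 1" using Qp by (simp add: field_simps)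
  then have "complex_of_real ((1 / sqrt Q) * (1 / sqrt Q) * Q) = 1" by simp
  moreover have "of_nat (card (W 0)) = complex_of_real Q" by (simp add: card_W0 Q_def)
  ultimately show ?thesis unfolding kq by (simp del: of_real_mult add: of_real_mult[symmetric])
qed

end



lemma separation:
  fixes V :: "(nat \<Rightarrow> 'a::field) set"
  assumes "finite I" "V \<subseteq> vecs I" "0 \<in> V" "\<forall>a\<in>V. \<forall>b\<in>V. a + b \<in> V"
    "\<forall>c. \<forall>a\<in>V. (\<lambda>i. c * a i) \<in> V" "v \<in> vecs I" "v \<notin> V"
  shows "\<exists>u\<in>vecs I. (\<forall>a\<in>V. (\<Sum>i\<in>I. u i * a i) = 0) \<and> (\<Sum>i\<in>I. u i * v i) \<noteq> 0"
  using assms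
proof (induction I arbitrary: V v rule: finite_induct)
  case empty
  then have "v = 0" by (simp add: vecs_def fun_eq_iff)
  then show ?case using empty by simp
next
  case (insert i0 I V v)
  show ?case
  proof (cases "\<forall>a\<in>V. a i0 = 0")
    case True
    show ?thesis
    proof (cases "v i0 = 0")
      case False
      define u :: "nat \<Rightarrow> 'a" where "u = (\<lambda>j. if j = i0 then 1 else 0)"
      have dot: "(\<Sum>j\<in>insert i0 I. u j * x j) = x i0" for x :: "nat \<Rightarrow> 'a"
      proof -
        have "(\<Sum>j\<in>insert i0 I. u j * x j) = u i0 * x i0 + (\<Sum>j\<in>I. u j * x j)"
          using insert by (simp add: sum.insert)
        moreover have "(\<Sum>j\<in>I. u j * x j) = 0" using insert(2) by (auto simp: u_def intro!: sum.neutral)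
        ultimately show ?thesis by (simp add: u_def)
      qed
      have "u \<in> vecs (insert i0 I)" by (simp add: u_def vecs_def)
      moreover have "\<forall>a\<in>V. (\<Sum>j\<in>insert i0 I. u j * a j) = 0" using True dot by simp
      moreover have "(\<Sum>j\<in>insert i0 I. u j * v j) \<noteq> 0" using False dot by simp
      ultimately show ?thesis by blast
    next
      case vi0: True
      have VI: "V \<subseteq> vecs I"
      proof
        fix a assume "a \<in> V"
        then have "a \<in> vecs (insert i0 I)" "a i0 = 0" using insert(4) True by auto
        then show "a \<in> vecs I" unfolding vecs_iff by (metis insert_iff)
      qed
      have vI: "v \<in> vecs I" using insert(8) vi0 by (auto simp: vecs_def)
      obtain u where u: "u \<in> vecs I" "\<forall>a\<in>V. (\<Sum>i\<in>I. u i * a i) = 0" "(\<Sum>i\<in>I. u i * v i) \<noteq> 0"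
        using insert.IH[OF VI insert(5,6,7) vI insert(9)] by blast
      have ui0: "u i0 = 0" using u(1) insert(2) by (simp add: vecs_def)
      have dot: "(\<Sum>j\<in>insert i0 I. u j * x j) = (\<Sum>j\<in>I. u j * x j)" for x :: "nat \<Rightarrow> 'a"
        using insert(1,2) ui0 by (simp add: sum.insert)
      have "u \<in> vecs (insert i0 I)" using u(1) by (auto simp: vecs_def)
      moreover have "\<forall>a\<in>V. (\<Sum>j\<in>insert i0 I. u j * a j) = 0" using u(2) dot by simp
      moreover have "(\<Sum>j\<in>insert i0 I. u j * v j) \<noteq> 0" using u(3) dot by simp
      ultimately show ?thesis by blast
    qed
  next
    case False
    then obtain p where p: "p \<in> V" "p i0 \<noteq> 0" by blast
    define p' where "p' = (\<lambda>j. (1 / p i0) * p j)"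
    have p'V: "p' \<in> V" using insert(7) p(1) unfolding p'_def by blast
    have p'i0: "p' i0 = 1" using p(2) by (simp add: p'_def)
    define \<phi> where "\<phi> = (\<lambda>a j. a j - a i0 * p' j)"
    have phiV: "\<phi> a \<in> V" if "a \<in> V" for a
    proof -
      have eq: "\<phi> a = a + (\<lambda>j. (- a i0) * p' j)" by (simp add: \<phi>_def fun_eq_iff)
      have "(\<lambda>j. (- a i0) * p' j) \<in> V" using insert(7) p'V by blast
      then have "a + (\<lambda>j. (- a i0) * p' j) \<in> V" using insert(6) that by blast
      then show ?thesis by (simp only: eq)
    qed
    define V' where "V' = \<phi> ` V"
    have p'v: "p' \<in> vecs (insert i0 I)" using p'V insert(4) by auto
    have phivecs: "\<phi> a \<in> vecs I" if "a \<in> vecs (insert i0 I)" for a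
      unfolding vecs_iff
    proof (intro allI impI)
      fix i assume "i \<notin> I"
      show "\<phi> a i = 0"
      proof (cases "i = i0")
        case True then show ?thesis using p'i0 by (simp add: \<phi>_def)
      next
        case False then show ?thesis using that p'v \<open>i \<notin> I\<close> by (simp add: vecs_def \<phi>_def)
      qed
    qed
    have V'I: "V' \<subseteq> vecs I" using phivecs insert(4) by (auto simp: V'_def)
    have V'0: "0 \<in> V'"
    proof -
      have "\<phi> 0 = 0" by (simp add: \<phi>_def fun_eq_iff)
      then show ?thesis using insert(5) unfolding V'_def by (metis image_eqI)
    qed
    have V'add: "\<forall>a\<in>V'. \<forall>b\<in>V'. a + b \<in> V'"
    proof (intro ballI)
      fix a b assume "a \<in> V'" "b \<in> V'"
      then obtain a0 b0 where ab: "a0 \<in> V" "b0 \<in> V" "a = \<phi> a0" "b = \<phi> b0" by (auto simp: V'_def)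
      have eq: "\<phi> a0 + \<phi> b0 = \<phi> (a0 + b0)" by (simp add: \<phi>_def fun_eq_iff algebra_simps)
      have "a0 + b0 \<in> V" using insert(6) ab(1,2) by blast
      then have "\<phi> (a0 + b0) \<in> V'" unfolding V'_def by (rule imageI)
      then show "a + b \<in> V'" using ab(3,4) eq by simp
    qed
    have V'sc: "\<forall>c. \<forall>a\<in>V'. (\<lambda>i. c * a i) \<in> V'"
    proof (intro allI ballI)
      fix c a assume "a \<in> V'"
      then obtain a0 where ab: "a0 \<in> V" "a = \<phi> a0" by (auto simp: V'_def)
      have eq: "(\<lambda>i. c * \<phi> a0 i) = \<phi> (\<lambda>i. c * a0 i)" by (simp add: \<phi>_def fun_eq_iff algebra_simps)
      have "(\<lambda>i. c * a0 i) \<in> V" using insert(7) ab(1) by blast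
      then have "\<phi> (\<lambda>i. c * a0 i) \<in> V'" unfolding V'_def by (rule imageI)
      then show "(\<lambda>i. c * a i) \<in> V'" using ab(2) eq by simp
    qed
    have v'I: "\<phi> v \<in> vecs I" using phivecs insert(8) by blast
    have v'V: "\<phi> v \<notin> V'"
    proof
      assume "\<phi> v \<in> V'"
      then obtain a where a: "a \<in> V" "\<phi> v = \<phi> a" by (auto simp: V'_def)
      have "v = \<phi> a + (\<lambda>j. v i0 * p' j)" using a(2) unfolding \<phi>_def fun_eq_iff
        by (metis diff_add_cancel plus_fun_apply)
      moreover have "(\<lambda>j. v i0 * p' j) \<in> V" using insert(7) p'V by blast
      ultimately have "v \<in> V" using phiV[OF a(1)] insert(6) by metis
      then show False using insert(9) by simp
    qed
    obtain u' where u': "u' \<in> vecs I" "\<forall>a\<in>V'. (\<Sum>i\<in>I. u' i * a i) = 0" "(\<Sum>i\<in>I. u' i * \<phi> v i) \<noteq> 0"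
      using insert.IH[OF V'I V'0 V'add V'sc v'I v'V] by blast
    define \<sigma> where "\<sigma> = (\<Sum>j\<in>I. u' j * p' j)"
    define u where "u = u'(i0 := - \<sigma>)"
    have dec: "(\<Sum>j\<in>I. u' j * x j) = (\<Sum>j\<in>I. u' j * \<phi> x j) + x i0 * \<sigma>" for x
    proof -
      have "\<forall>j. u' j * x j = u' j * \<phi> x j + x i0 * (u' j * p' j)" by (simp add: \<phi>_def algebra_simps)
      then have "(\<Sum>j\<in>I. u' j * x j) = (\<Sum>j\<in>I. u' j * \<phi> x j + x i0 * (u' j * p' j))" by simp
      also have "\<dots> = (\<Sum>j\<in>I. u' j * \<phi> x j) + x i0 * \<sigma>" by (simp add: sum.distrib sum_distrib_left \<sigma>_def)
      finally show ?thesis .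
    qed
    have dot: "(\<Sum>j\<in>insert i0 I. u j * x j) = - \<sigma> * x i0 + (\<Sum>j\<in>I. u' j * x j)" for x
    proof -
      have "(\<Sum>j\<in>I. u j * x j) = (\<Sum>j\<in>I. u' j * x j)" using insert(2) by (intro sum.cong) (auto simp: u_def)
      then show ?thesis using insert(1,2) by (simp add: sum.insert u_def)
    qed
    have "u \<in> vecs (insert i0 I)" using u'(1) by (auto simp: vecs_def u_def)
    moreover have "\<forall>a\<in>V. (\<Sum>j\<in>insert i0 I. u j * a j) = 0"
    proof
      fix a assume "a \<in> V"
      then have "\<phi> a \<in> V'" by (simp add: V'_def)
      then have "(\<Sum>j\<in>I. u' j * \<phi> a j) = 0" using u'(2) by blast
      then show "(\<Sum>j\<in>insert i0 I. u j * a j) = 0" using dot[of a] dec[of a] by simp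
    qed
    moreover have "(\<Sum>j\<in>insert i0 I. u j * v j) \<noteq> 0" using u'(3) dot[of v] dec[of v] by simp
    ultimately show ?thesis by blast
  qed
qed



definition restr :: "nat set \<Rightarrow> (nat \<Rightarrow> 'b::zero) \<Rightarrow> nat \<Rightarrow> 'b" where
  "restr A w = (\<lambda>i. if i \<in> A then w i else 0)"

lemma restr_add: "restr A (a + b) = restr A a + restr A (b::nat \<Rightarrow> 'b::monoid_add)"
  by (simp add: restr_def fun_eq_iff)
lemma restr_diff: "restr A (a - b) = restr A a - restr A (b::nat \<Rightarrow> 'b::group_add)"
  by (simp add: restr_def fun_eq_iff)
lemma restr_id: "v \<in> vecs A \<Longrightarrow> restr A v = v"
  by (simp add: restr_def fun_eq_iff vecs_def)
lemma restr_zero: "v \<in> vecs B \<Longrightarrow> A \<inter> B = {} \<Longrightarrow> restr A v = 0"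
  by (auto simp add: restr_def fun_eq_iff vecs_def)
lemma restr_vecs: "restr A v \<in> vecs A"
  by (simp add: restr_def vecs_def)

lemma sum_list_map_nth: "sum_list (map g L) = (\<Sum>i<length L. g (L ! i))"
  by (simp add: sum_list_sum_nth atLeast0LessThan)

lemma sum_Ks:
  assumes "set jl = S" "distinct jl" "set xl = T" "distinct xl"
  shows "(\<Sum>i<length (map K1 jl @ map K2 xl). g ((map K1 jl @ map K2 xl) ! i))
       = (\<Sum>j\<in>S. g (K1 j)) + (\<Sum>x\<in>T. g (K2 x))"
proof -
  have "(\<Sum>i<length (map K1 jl @ map K2 xl). g ((map K1 jl @ map K2 xl) ! i))
      = sum_list (map g (map K1 jl @ map K2 xl))"
    by (rule sum_list_map_nth[symmetric])
  also have "\<dots> = sum_list (map (g \<circ> K1) jl) + sum_list (map (g \<circ> K2) xl)" by simp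
  also have "\<dots> = (\<Sum>j\<in>S. g (K1 j)) + (\<Sum>x\<in>T. g (K2 x))"
    using assms by (simp add: sum_list_distinct_conv_sum_set)
  finally show ?thesis .
qed

lemma sum_indicator: "finite P \<Longrightarrow> (\<Sum>p\<in>P. (if Q p then 1 else 0) :: complex) = of_nat (card {p\<in>P. Q p})"
proof -
  assume "finite P"
  then have "(\<Sum>p\<in>P. (if Q p then 1 else 0) :: complex) = (\<Sum>p\<in>{p\<in>P. Q p}. 1)"
    by (simp add: sum.inter_filter[symmetric])
  then show ?thesis by simp
qed

context ecss
begin

lemma F0_add: "a \<in> F0 \<Longrightarrow> b \<in> F0 \<Longrightarrow> a + b \<in> F0"
  using lc0 by (simp add: linear_code_def vadd_eq)

lemma F1_sub_F0: "F1 \<subseteq> F0" using sub by blast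

lemma suff:
  assumes J: "J \<subseteq> {..<n}"
    and X: "\<forall>c\<in>F0. (\<forall>i\<in>J. c i = 0) \<longrightarrow> c \<in> F1"
    and Z: "\<forall>s\<in>vecs {..<k}. \<exists>r1\<in>vecs {..<f}. \<exists>r2\<in>vecs {..<e}. \<forall>i\<in>{..<n}-J. word s r1 r2 i = 0"
  shows "ecss_authorized n G01 G1 GE (J \<union> {n..<n+e})"
proof -
  define A where "A = J \<union> {n..<n+e}"
  define B where "B = {..<n} - J"
  have BA: "{..<n+e} - A = B" using J by (auto simp: A_def B_def)
  have AB: "A \<inter> B = {}" by (auto simp: A_def B_def)
  have AuB: "A \<union> B = {..<n+e}" using J by (auto simp: A_def B_def)
  have finA: "finite A" using J by (auto simp: A_def intro: finite_subset)
  have finB: "finite B" by (simp add: B_def)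
  have "\<forall>s\<in>vecs {..<k}. \<exists>r. r \<in> vecs {..<f} \<times> vecs {..<e} \<and> (\<forall>i\<in>B. word s (fst r) (snd r) i = 0)"
    using Z unfolding B_def by fastforce
  then obtain R where R: "\<forall>s\<in>vecs {..<k}. R s \<in> vecs {..<f} \<times> vecs {..<e} \<and> (\<forall>i\<in>B. word s (fst (R s)) (snd (R s)) i = 0)"
    by (metis bchoice)
  define ws where "ws s = word s (fst (R s)) (snd (R s))" for s
  have ws_W: "ws s \<in> W s" if "s \<in> vecs {..<k}" for s
    using R that by (auto simp: ws_def W_def mem_Times_iff)
  have ws_A: "ws s \<in> vecs A" if "s \<in> vecs {..<k}" for s
    unfolding vecs_iff
  proof (intro allI impI)
    fix i assume "i \<notin> A"
    show "ws s i = 0"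
    proof (cases "i < n + e")
      case True
      then have "i \<in> B" using \<open>i \<notin> A\<close> by (auto simp: A_def B_def)
      then show ?thesis using R that by (simp add: ws_def)
    next
      case False
      then show ?thesis using word_v by (simp add: ws_def vecs_def)
    qed
  qed
  define S0 where "S0 = restr A ` W 0"
  have S0A: "S0 \<subseteq> vecs A" by (auto simp: S0_def restr_vecs)
  have finS0: "finite S0" using finite_W by (simp add: S0_def)
  define T where "T s = restr A ` W s" for s
  define U where "U = (\<Union>s\<in>vecs {..<k}. T s)"
  have disj: "s = s'" if H: "s \<in> vecs {..<k}" "s' \<in> vecs {..<k}" "w \<in> W s" "w' \<in> W s'"
    "restr A w = restr A w'" for s s' w w'
  proof -
    obtain a b where ab: "a \<in> vecs {..<f}" "b \<in> vecs {..<e}" "w = word s a b" using H(3) by (auto simp: W_def)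
    obtain a' b' where ab': "a' \<in> vecs {..<f}" "b' \<in> vecs {..<e}" "w' = word s' a' b'" using H(4) by (auto simp: W_def)
    have DA: "(w' - w) i = 0" if "i \<in> A" for i
      using fun_cong[OF H(5), of i] that by (simp add: restr_def)
    have bb: "b' - b = 0"
    proof
      fix i show "(b' - b) i = 0 i"
      proof (cases "i < e")
        case True
        then have "n + i \<in> A" by (simp add: A_def)
        then show ?thesis using DA[of "n+i"] ab ab' True by (simp add: ecss_word_def)
      next
        case False then show ?thesis using ab(2) ab'(2) by (simp add: vecs_def)
      qed
    qed
    define c where "c = lincomb G01 (s' - s) + lincomb G1 (a' - a)"
    have cF0: "c \<in> F0" unfolding c_def using F0_add G01_in G1_in F1_sub_F0 by blast
    have "\<forall>i\<in>J. c i = 0"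
    proof
      fix i assume "i \<in> J"
      then have "i \<in> A" "i < n" using J by (auto simp: A_def)
      then have "(w' - w) i = 0" using DA by blast
      moreover have "(w' - w) i = c i"
        using \<open>i < n\<close> ab ab' bb by (simp add: ecss_word_def c_def lincomb_diff algebra_simps)
      ultimately show "c i = 0" by simp
    qed
    then have "c \<in> F1" using X cF0 by blast
    then obtain r where r: "r \<in> vecs {..<f}" "c = lincomb G1 r"
      using gm1 by (auto simp: generator_matrix_def row_space_def)
    have "lincomb G01 (s' - s) + lincomb G1 (a' - a - r) = 0"
      using r(2) unfolding c_def lincomb_diff by (simp add: algebra_simps)
    then have "s' - s = 0" using indep0[of "s' - s" "a' - a - r"] H(1,2) ab(1) ab'(1) r(1)
      by (simp add: vecs_diff)
    then show ?thesis by simp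
  qed
  have T_char: "x \<in> T s \<longleftrightarrow> x - ws s \<in> S0" if "s \<in> vecs {..<k}" "x \<in> vecs A" for s x
  proof
    assume "x \<in> T s"
    then obtain w where w: "w \<in> W s" "x = restr A w" by (auto simp: T_def)
    then have "w - ws s \<in> W 0" using W_shift ws_W that(1) by blast
    moreover have "restr A (w - ws s) = x - ws s" using w(2) ws_A[OF that(1)] by (simp add: restr_diff restr_id)
    ultimately show "x - ws s \<in> S0" unfolding S0_def by (metis image_eqI)
  next
    assume "x - ws s \<in> S0"
    then obtain c where c: "c \<in> W 0" "x - ws s = restr A c" by (auto simp: S0_def)
    have "(ws s + c) - ws s \<in> W 0" using c(1) by simp
    then have "ws s + c \<in> W s" using W_shift ws_W that(1) by blast
    moreover have "restr A (ws s + c) = x" using c(2) ws_A[OF that(1)]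
      by (simp add: restr_add restr_id) (metis add.commute diff_add_cancel)
    ultimately show "x \<in> T s" unfolding T_def by (metis image_eqI)
  qed
  have T_uniq: "s = s'" if "s \<in> vecs {..<k}" "s' \<in> vecs {..<k}" "x \<in> T s" "x \<in> T s'" for s s' x
    using that disj by (auto simp: T_def)
  obtain jl where jl: "set jl = S0" "distinct jl" using finS0 finite_distinct_list by blast
  have finVA: "finite (vecs A :: (nat \<Rightarrow> 'a) set)" using finite_vecs[OF finA] .
  have finAU: "finite (vecs A - U)" using finVA by simp
  obtain xl where xl: "set xl = vecs A - U" "distinct xl" using finAU finite_distinct_list by blast
  define K1 where "K1 j = (\<lambda>(s::nat \<Rightarrow> 'a) (x::nat \<Rightarrow> 'a). if x = ws s + j then (1::complex) else 0)" for j
  define K2 where "K2 x0 = (\<lambda>(s::nat \<Rightarrow> 'a) (x::nat \<Rightarrow> 'a). if s = 0 \<and> x = x0 then (1::complex) else 0)" for x0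
  define Ks where "Ks = map K1 jl @ map K2 xl"
  have sK: "(\<Sum>i<length Ks. g (Ks ! i)) = (\<Sum>j\<in>S0. g (K1 j)) + (\<Sum>x\<in>vecs A - U. g (K2 x))" for g
    unfolding Ks_def by (rule sum_Ks[OF jl xl])
  have finK: "finite (vecs {..<k} :: (nat \<Rightarrow> 'a) set)" by (simp add: finite_vecs)
  have zk: "(0::nat \<Rightarrow> 'a) \<in> vecs {..<k}" by (rule vecs_zero)
  have tp: "kraus_tp A (vecs {..<k}) Ks"
    unfolding kraus_tp_def
  proof (intro ballI)
    fix x y :: "nat \<Rightarrow> 'a" assume x: "x \<in> vecs A" and y: "y \<in> vecs A"
    have p2: "(\<Sum>s\<in>vecs {..<k}. cnj (K2 x0 s x) * K2 x0 s y) = (if x = x0 \<and> y = x0 then 1 else 0)" for x0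
      by (subst sum_single[OF finK zk]) (auto simp: K2_def)
    have P2: "(\<Sum>x0\<in>vecs A - U. \<Sum>s\<in>vecs {..<k}. cnj (K2 x0 s x) * K2 x0 s y)
        = (if x = y \<and> x \<notin> U then 1 else 0)"
    proof (cases "x = y \<and> x \<notin> U")
      case True
      then show ?thesis unfolding p2 using x finAU by (subst sum_single[of _ x]) auto
    next
      case False
      then show ?thesis unfolding p2 by (auto intro!: sum.neutral)
    qed
    have P1: "(\<Sum>j\<in>S0. \<Sum>s\<in>vecs {..<k}. cnj (K1 j s x) * K1 j s y) = (if x = y \<and> x \<in> U then 1 else 0)"
    proof (cases "x = y")
      case False
      then show ?thesis by (auto simp: K1_def intro!: sum.neutral)
    next
      case True
      have "(\<Sum>j\<in>S0. \<Sum>s\<in>vecs {..<k}. cnj (K1 j s x) * K1 j s y)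
          = (\<Sum>s\<in>vecs {..<k}. \<Sum>j\<in>S0. (if j = x - ws s then 1 else 0))"
        using True by (subst sum.swap) (auto simp: K1_def intro!: sum.cong)
      also have "\<dots> = (\<Sum>s\<in>vecs {..<k}. if x \<in> T s then 1 else 0)"
        using finS0 T_char x by (intro sum.cong) (auto simp: sum.delta)
      also have "\<dots> = (if x \<in> U then 1 else 0)"
      proof (cases "x \<in> U")
        case True
        then obtain s0 where s0: "s0 \<in> vecs {..<k}" "x \<in> T s0" by (auto simp: U_def)
        have "(\<Sum>s\<in>vecs {..<k}. if x \<in> T s then 1 else (0::complex)) = (if x \<in> T s0 then 1 else 0)"
          using T_uniq s0 by (intro sum_single[OF finK s0(1)]) auto
        then show ?thesis using True s0 by simp
      next
        case False
        then show ?thesis by (auto simp: U_def intro!: sum.neutral)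
      qed
      finally show ?thesis using True by simp
    qed
    show "(\<Sum>j<length Ks. \<Sum>s\<in>vecs {..<k}. cnj ((Ks ! j) s x) * (Ks ! j) s y) = (if x = y then 1 else 0)"
      using sK[of "\<lambda>K. \<Sum>s\<in>vecs {..<k}. cnj (K s x) * K s y"] P1 P2 by auto
  qed
  have rec: "kraus_apply A Ks (reduced_state (n + e) A (ecss_encode n G01 G1 GE psi)) s t = psi s * cnj (psi t)"
    if s: "s \<in> vecs {..<k}" and t: "t \<in> vecs {..<k}" for psi s t
  proof -
    define \<Phi> where "\<Phi> = ecss_encode n G01 G1 GE psi"
    define \<rho> where "\<rho> = reduced_state (n + e) A \<Phi>"
    have rho: "\<rho> x y = (\<Sum>z\<in>vecs B. \<Phi> (x + z) * cnj (\<Phi> (y + z)))" for x y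
      by (simp add: \<rho>_def reduced_state_def BA vadd_eq)
    have Phi_out: "\<Phi> (x + z) = 0" if "x \<in> vecs A" "x \<notin> U" "z \<in> vecs B" for x z
    proof -
      have "restr A (x + z) = x" using that AB by (simp add: restr_add restr_id restr_zero)
      then have "x + z \<notin> W s'" if "s' \<in> vecs {..<k}" for s'
        using \<open>x \<notin> U\<close> that unfolding U_def T_def by (metis UN_I image_eqI)
      then show ?thesis by (auto simp: \<Phi>_def ecss_encode_def amp_char intro!: sum.neutral)
    qed
    have Phi_in: "\<Phi> (ws s' + j + z) = psi s' * (if j + z \<in> W 0 then kap else 0)"
      if s': "s' \<in> vecs {..<k}" and j: "j \<in> S0" and z: "z \<in> vecs B" for s' j z
    proof -
      have jA: "j \<in> vecs A" using j S0A by blast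
      have rA: "restr A (ws s' + j + z) = ws s' + j"
        using ws_A[OF s'] jA z AB by (simp add: restr_add restr_id restr_zero)
      have inT: "ws s' + j \<in> T s'" using T_char[OF s'] s' jA ws_A[OF s'] j by (simp add: vecs_add)
      have notW: "ws s' + j + z \<notin> W s''" if "s'' \<in> vecs {..<k}" "s'' \<noteq> s'" for s''
      proof
        assume "ws s' + j + z \<in> W s''"
        then have "ws s' + j \<in> T s''" using rA unfolding T_def by (metis image_eqI)
        then show False using T_uniq[OF s' that(1) inT] that(2) by simp
      qed
      have "\<Phi> (ws s' + j + z) = psi s' * ecss_amp n G01 G1 GE s' (ws s' + j + z)"
        unfolding \<Phi>_def ecss_encode_def using notW
        by (intro sum_single[OF finK s']) (auto simp: amp_char)
      moreover have "ws s' + j + z \<in> W s' \<longleftrightarrow> j + z \<in> W 0"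
        using W_shift[OF ws_W[OF s']] by (simp add: add.assoc)
      ultimately show ?thesis by (simp add: amp_char)
    qed
    have ka: "kraus_apply A Ks \<rho> s t
        = (\<Sum>j\<in>S0. \<Sum>x\<in>vecs A. \<Sum>y\<in>vecs A. K1 j s x * \<rho> x y * cnj (K1 j t y))
        + (\<Sum>x0\<in>vecs A - U. \<Sum>x\<in>vecs A. \<Sum>y\<in>vecs A. K2 x0 s x * \<rho> x y * cnj (K2 x0 t y))"
      unfolding kraus_apply_def by (rule sK)
    have inner1: "(\<Sum>x\<in>vecs A. \<Sum>y\<in>vecs A. K1 j s x * \<rho> x y * cnj (K1 j t y)) = \<rho> (ws s + j) (ws t + j)"
      if "j \<in> S0" for j
    proof -
      have jA: "j \<in> vecs A" using that S0A by blast
      have a1: "ws s + j \<in> vecs A" using ws_A[OF s] jA by (simp add: vecs_add)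
      have a2: "ws t + j \<in> vecs A" using ws_A[OF t] jA by (simp add: vecs_add)
      have "(\<Sum>x\<in>vecs A. \<Sum>y\<in>vecs A. K1 j s x * \<rho> x y * cnj (K1 j t y))
          = (\<Sum>y\<in>vecs A. K1 j s (ws s + j) * \<rho> (ws s + j) y * cnj (K1 j t y))"
        by (rule sum_single[OF finVA a1]) (simp add: K1_def)
      also have "\<dots> = K1 j s (ws s + j) * \<rho> (ws s + j) (ws t + j) * cnj (K1 j t (ws t + j))"
        by (rule sum_single[OF finVA a2]) (simp add: K1_def)
      finally show ?thesis by (simp add: K1_def)
    qed
    have inner2: "(\<Sum>x\<in>vecs A. \<Sum>y\<in>vecs A. K2 x0 s x * \<rho> x y * cnj (K2 x0 t y)) = 0"
      if "x0 \<in> vecs A - U" for x0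
    proof -
      have "\<rho> x0 x0 = 0" unfolding rho using that Phi_out by (auto intro!: sum.neutral)
      then show ?thesis by (auto simp: K2_def intro!: sum.neutral)
    qed
    have rho_j: "\<rho> (ws s + j) (ws t + j) = psi s * cnj (psi t) * (kap * cnj kap) * (\<Sum>z\<in>vecs B. if j + z \<in> W 0 then 1 else 0)"
      if "j \<in> S0" for j
      unfolding rho using Phi_in[OF s that] Phi_in[OF t that]
      by (simp add: sum_distrib_left add.assoc if_distrib cong: if_cong) (auto intro!: sum.cong)
    have count: "(\<Sum>j\<in>S0. \<Sum>z\<in>vecs B. (if j + z \<in> W 0 then 1 else 0) :: complex) = of_nat (card (W 0))"
    proof -
      have finVB: "finite (vecs B :: (nat \<Rightarrow> 'a) set)" using finite_vecs[OF finB] .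
      have "(\<Sum>j\<in>S0. \<Sum>z\<in>vecs B. (if j + z \<in> W 0 then 1 else 0) :: complex)
          = (\<Sum>p\<in>S0 \<times> vecs B. (if fst p + snd p \<in> W 0 then 1 else 0))"
        by (simp add: sum.cartesian_product case_prod_beta)
      also have "\<dots> = of_nat (card {p \<in> S0 \<times> vecs B. fst p + snd p \<in> W 0})"
        using finS0 finVB by (simp add: sum_indicator)
      also have "card {p \<in> S0 \<times> vecs B. fst p + snd p \<in> W 0} = card (W 0)"
      proof (rule bij_betw_same_card[of "\<lambda>p. fst p + snd p"], unfold bij_betw_def, intro conjI)
        show "inj_on (\<lambda>p. fst p + snd p) {p \<in> S0 \<times> vecs B. fst p + snd p \<in> W 0}"
        proof (rule inj_onI)
          fix p q assume p: "p \<in> {p \<in> S0 \<times> vecs B. fst p + snd p \<in> W 0}"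
            and q: "q \<in> {p \<in> S0 \<times> vecs B. fst p + snd p \<in> W 0}" and eq: "fst p + snd p = fst q + snd q"
          have "restr A (fst p + snd p) = fst p" using p S0A AB by (auto simp: restr_add restr_id restr_zero)
          moreover have "restr A (fst q + snd q) = fst q" using q S0A AB by (auto simp: restr_add restr_id restr_zero)
          ultimately have "fst p = fst q" using eq by simp
          then show "p = q" using eq by (simp add: prod_eq_iff)
        qed
        show "(\<lambda>p. fst p + snd p) ` {p \<in> S0 \<times> vecs B. fst p + snd p \<in> W 0} = W 0"
        proof
          show "(\<lambda>p. fst p + snd p) ` {p \<in> S0 \<times> vecs B. fst p + snd p \<in> W 0} \<subseteq> W 0" by auto
          show "W 0 \<subseteq> (\<lambda>p. fst p + snd p) ` {p \<in> S0 \<times> vecs B. fst p + snd p \<in> W 0}"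
          proof
            fix w assume w: "w \<in> W 0"
            have wv: "w \<in> vecs {..<n+e}" using w W_v by blast
            have "restr A w + restr B w = w"
              using wv AuB AB by (auto simp: restr_def fun_eq_iff vecs_def)
            moreover have "restr A w \<in> S0" using w by (simp add: S0_def)
            moreover have "restr B w \<in> vecs B" by (rule restr_vecs)
            ultimately show "w \<in> (\<lambda>p. fst p + snd p) ` {p \<in> S0 \<times> vecs B. fst p + snd p \<in> W 0}"
              using w by (intro image_eqI[of _ _ "(restr A w, restr B w)"]) auto
          qed
        qed
      qed
      finally show ?thesis .
    qed
    have "kraus_apply A Ks \<rho> s t = (\<Sum>j\<in>S0. \<rho> (ws s + j) (ws t + j))"
      unfolding ka using inner1 inner2 by simp
    also have "\<dots> = psi s * cnj (psi t) * (kap * cnj kap) * (\<Sum>j\<in>S0. \<Sum>z\<in>vecs B. if j + z \<in> W 0 then 1 else 0)"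
      using rho_j by (simp add: sum_distrib_left)
    also have "\<dots> = psi s * cnj (psi t)"
      unfolding count using kap_sq by (simp add: mult.assoc)
    finally show ?thesis by (simp add: \<rho>_def \<Phi>_def)
  qed
  show ?thesis unfolding ecss_authorized_def A_def[symmetric]
    using tp rec by blast
qed

end



lemma enc_single:
  assumes "finite S" "a \<in> S" "\<forall>s\<in>S. s \<noteq> a \<longrightarrow> psi s = 0"
  shows "(\<Sum>s\<in>S. psi s * g s) = psi a * (g a :: complex)"
  using assms by (intro sum_single) auto

context ecss
begin

lemma nec_X:
  assumes J: "J \<subseteq> {..<n}" and c: "c \<in> F0" "c \<notin> F1" and cJ: "\<forall>i\<in>J. c i = 0"
  shows "\<not> ecss_authorized n G01 G1 GE (J \<union> {n..<n+e})"
proof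
  assume auth: "ecss_authorized n G01 G1 GE (J \<union> {n..<n+e})"
  define A where "A = J \<union> {n..<n+e}"
  define B where "B = {..<n} - J"
  have BA: "{..<n+e} - A = B" using J by (auto simp: A_def B_def)
  obtain d1 d2 where d: "d1 \<in> vecs {..<k}" "d2 \<in> vecs {..<f}" "c = lincomb G01 d1 + lincomb G1 d2"
    using F0_split[OF c(1)] by blast
  have d10: "d1 \<noteq> 0"
  proof
    assume "d1 = 0"
    then have "c = lincomb G1 d2" using d(3) by (simp add: lincomb_zero)
    then show False using c(2) G1_in by simp
  qed
  have cv: "c \<in> vecs {..<n}" using c(1) F0v by blast
  have cB: "c \<in> vecs B" using cv cJ by (auto simp: vecs_def B_def)
  have cword: "c = word d1 d2 0"
  proof
    fix i show "c i = word d1 d2 0 i"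
      using cv d(3) by (auto simp: ecss_word_def lincomb_zero vecs_def)
  qed
  have cW: "c \<in> W d1" using d(2) cword by (auto simp: W_def intro: vecs_zero)
  have ampsh: "ecss_amp n G01 G1 GE d1 w = ecss_amp n G01 G1 GE 0 (w - c)" for w
    using W_shift[OF cW, of w] by (simp add: amp_char)
  have finK: "finite (vecs {..<k} :: (nat \<Rightarrow> 'a) set)" by (simp add: finite_vecs)
  define psi1 :: "(nat \<Rightarrow> 'a) \<Rightarrow> complex" where "psi1 = (\<lambda>s. if s = 0 then 1 else 0)"
  define psi2 :: "(nat \<Rightarrow> 'a) \<Rightarrow> complex" where "psi2 = (\<lambda>s. if s = d1 then 1 else 0)"
  have enc1: "ecss_encode n G01 G1 GE psi1 x = ecss_amp n G01 G1 GE 0 x" for x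
    unfolding ecss_encode_def using enc_single[OF finK vecs_zero, of psi1] by (simp add: psi1_def)
  have enc2: "ecss_encode n G01 G1 GE psi2 x = ecss_amp n G01 G1 GE d1 x" for x
    unfolding ecss_encode_def using enc_single[OF finK d(1), of psi2] by (simp add: psi2_def)
  have n1: "(\<Sum>s\<in>vecs {..<k}. (cmod (psi1 s))\<^sup>2) = 1"
    using sum_single[OF finK vecs_zero, of "\<lambda>s. (cmod (psi1 s))\<^sup>2"] by (simp add: psi1_def)
  have n2: "(\<Sum>s\<in>vecs {..<k}. (cmod (psi2 s))\<^sup>2) = 1"
    using sum_single[OF finK d(1), of "\<lambda>s. (cmod (psi2 s))\<^sup>2"] by (simp add: psi2_def)
  have req: "reduced_state (n + e) A (ecss_encode n G01 G1 GE psi2) = reduced_state (n + e) A (ecss_encode n G01 G1 GE psi1)"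
  proof (intro ext)
    fix x y
    have "reduced_state (n + e) A (ecss_encode n G01 G1 GE psi2) x y
        = (\<Sum>z\<in>vecs B. ecss_amp n G01 G1 GE 0 (x + (z - c)) * cnj (ecss_amp n G01 G1 GE 0 (y + (z - c))))"
      by (simp add: reduced_state_def BA vadd_eq enc2 ampsh algebra_simps)
    also have "\<dots> = (\<Sum>z\<in>vecs B. ecss_amp n G01 G1 GE 0 (x + z) * cnj (ecss_amp n G01 G1 GE 0 (y + z)))"
      by (rule sum.reindex_bij_witness[of _ "\<lambda>z. z + c" "\<lambda>z. z - c"])
         (auto simp: cB vecs_add vecs_diff)
    also have "\<dots> = reduced_state (n + e) A (ecss_encode n G01 G1 GE psi1) x y"
      by (simp add: reduced_state_def BA vadd_eq enc1)
    finally show "reduced_state (n + e) A (ecss_encode n G01 G1 GE psi2) x y = reduced_state (n + e) A (ecss_encode n G01 G1 GE psi1) x y" .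
  qed
  obtain Ks where Ks: "\<forall>psi. (\<Sum>s\<in>vecs {..<k}. (cmod (psi s))\<^sup>2) = 1 \<longrightarrow>
           (\<forall>s\<in>vecs {..<k}. \<forall>t\<in>vecs {..<k}.
              kraus_apply A Ks (reduced_state (n + e) A (ecss_encode n G01 G1 GE psi)) s t
                = psi s * cnj (psi t))"
    using auth unfolding ecss_authorized_def A_def by blast
  have "psi1 0 * cnj (psi1 0) = psi2 0 * cnj (psi2 0)"
    using Ks[rule_format, OF n1, of 0 0] Ks[rule_format, OF n2, of 0 0] req by (simp add: vecs_zero)
  then show False using d10 by (simp add: psi1_def psi2_def)
qed

lemma dotn_add: "(\<Sum>i<n. u i * (a + b) i) = (\<Sum>i<n. u i * a i) + (\<Sum>i<n. u i * (b::nat \<Rightarrow> 'a) i)"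
  by (simp add: distrib_left sum.distrib)
lemma dotn_diff: "(\<Sum>i<n. u i * (a - b) i) = (\<Sum>i<n. u i * a i) - (\<Sum>i<n. u i * (b::nat \<Rightarrow> 'a) i)"
  by (simp add: right_diff_distrib sum_subtractf)

lemma E_zero: "zerov \<in> row_space GE"
  using GE_in[of 0] by (simp add: lincomb_zero zerov_eq)
lemma F1_zero: "zerov \<in> F1" using lc1 by (simp add: linear_code_def)
lemma F0_zero: "zerov \<in> F0" using lc0 by (simp add: linear_code_def)

lemma nec_Z:
  assumes J: "J \<subseteq> {..<n}" and u1: "u \<in> dual n (code_sum F1 (row_space GE))"
    and u2: "u \<notin> dual n (code_sum F0 (row_space GE))" and uJ: "\<forall>i\<in>J. u i = 0"
  shows "\<not> ecss_authorized n G01 G1 GE (J \<union> {n..<n+e})"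
proof
  assume auth: "ecss_authorized n G01 G1 GE (J \<union> {n..<n+e})"
  define A where "A = J \<union> {n..<n+e}"
  define B where "B = {..<n} - J"
  have BA: "{..<n+e} - A = B" using J by (auto simp: A_def B_def)
  define dn where "dn v = (\<Sum>i<n. u i * v i)" for v :: "nat \<Rightarrow> 'a"
  have uv: "u \<in> vecs {..<n}" using u1 by (simp add: dual_def)
  have dn_add: "dn (p + q) = dn p + dn q" for p q by (simp add: dn_def distrib_left sum.distrib)
  have dn_diff: "dn (p - q) = dn p - dn q" for p q by (simp add: dn_def right_diff_distrib sum_subtractf)
  have perp: "dn g = 0" if "g \<in> code_sum F1 (row_space GE)" for g
    using u1 that by (simp add: dual_def dn_def)
  obtain a where a: "a \<in> code_sum F0 (row_space GE)" "dn a \<noteq> 0"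
    using u2 uv by (auto simp: dual_def dn_def)
  obtain a0 e0 where ae: "a0 \<in> F0" "e0 \<in> row_space GE" "a = a0 + e0"
    using a(1) by (auto simp: code_sum_def vadd_eq)
  have "e0 \<in> code_sum F1 (row_space GE)" using ae(2) F1_zero
    unfolding code_sum_def vadd_eq zerov_eq by (metis (mono_tags, lifting) add_0 mem_Collect_eq)
  then have "dn a0 \<noteq> 0" using a(2) ae(3) perp dn_add by simp
  obtain d1 d2 where d: "d1 \<in> vecs {..<k}" "d2 \<in> vecs {..<f}" "a0 = lincomb G01 d1 + lincomb G1 d2"
    using F0_split[OF ae(1)] by blast
  have G1perp: "dn (lincomb G1 r) = 0" for r
  proof -
    have "lincomb G1 r + zerov \<in> code_sum F1 (row_space GE)"
      using G1_in E_zero unfolding code_sum_def vadd_eq by blast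
    then show ?thesis using perp by (simp add: zerov_eq)
  qed
  have GEperp: "dn (lincomb GE r) = 0" for r
  proof -
    have "zerov + lincomb GE r \<in> code_sum F1 (row_space GE)"
      using GE_in F1_zero unfolding code_sum_def vadd_eq by blast
    then show ?thesis using perp by (simp add: zerov_eq)
  qed
  have key: "dn (lincomb G01 d1) \<noteq> 0"
    using \<open>dn a0 \<noteq> 0\<close> d(3) G1perp dn_add by simp
  have d10: "d1 \<noteq> 0" using key by (auto simp: lincomb_zero dn_def)
  have dword: "dn (word s r1 r2) = dn (lincomb G01 s) + dn (lincomb G1 r1) + dn (lincomb GE r2)" for s r1 r2
    unfolding dn_def by (simp add: ecss_word_def distrib_left sum.distrib)
  have clash: False if H: "x \<in> vecs A" "y \<in> vecs A" "x + z \<in> W 0" "y + z \<in> W d1" for x y z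
  proof -
    obtain a b where ab: "a \<in> vecs {..<f}" "b \<in> vecs {..<e}" "x + z = word 0 a b" using H(3) by (auto simp: W_def)
    obtain a' b' where ab': "y + z = word d1 a' b'" using H(4) by (auto simp: W_def)
    have "y - x = (y + z) - (x + z)" by (simp add: algebra_simps)
    also have "\<dots> = word (d1 - 0) (a' - a) (b' - b)" using ab(3) ab' word_diff by simp
    finally have "y - x = word d1 (a' - a) (b' - b)" by simp
    then have "dn (y - x) = dn (lincomb G01 d1)" using dword G1perp GEperp by simp
    moreover have "dn (y - x) = 0" unfolding dn_def
    proof (intro sum.neutral ballI)
      fix i assume "i \<in> {..<n}"
      show "u i * (y - x) i = 0"
      proof (cases "i \<in> J")
        case True then show ?thesis using uJ by simp
      next
        case False
        then have "i \<notin> A" using \<open>i \<in> {..<n}\<close> by (auto simp: A_def)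
        then show ?thesis using H(1,2) by (simp add: vecs_def)
      qed
    qed
    ultimately show False using key by simp
  qed
  have finK: "finite (vecs {..<k} :: (nat \<Rightarrow> 'a) set)" by (simp add: finite_vecs)
  define h :: complex where "h = complex_of_real (1 / sqrt 2)"
  have h0: "h \<noteq> 0" by (simp add: h_def)
  have ch: "cmod h = 1 / sqrt 2" unfolding h_def norm_of_real by simp
  have hh: "(cmod h)\<^sup>2 = 1 / 2" unfolding ch by (simp add: power_divide)
  define psi :: "complex \<Rightarrow> (nat \<Rightarrow> 'a) \<Rightarrow> complex" where
    "psi \<sigma> = (\<lambda>s. if s = 0 then h else if s = d1 then \<sigma> * h else 0)" for \<sigma>
  have enc: "ecss_encode n G01 G1 GE (psi \<sigma>) w = h * ecss_amp n G01 G1 GE 0 w + \<sigma> * h * ecss_amp n G01 G1 GE d1 w" for \<sigma> w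
    unfolding ecss_encode_def using d10 d(1)
    by (subst sum_two[OF finK vecs_zero d(1)]) (auto simp: psi_def)
  have nrm: "(\<Sum>s\<in>vecs {..<k}. (cmod (psi \<sigma> s))\<^sup>2) = 1" if "cmod \<sigma> = 1" for \<sigma>
    using d10 d(1) that hh
    by (subst sum_two[OF finK vecs_zero d(1)]) (auto simp: psi_def norm_mult power_mult_distrib)
  have req: "reduced_state (n + e) A (ecss_encode n G01 G1 GE (psi 1)) x y = reduced_state (n + e) A (ecss_encode n G01 G1 GE (psi (-1))) x y"
    if True: "x \<in> vecs A \<and> y \<in> vecs A" for x y
      unfolding reduced_state_def BA vadd_eq enc
      proof (intro sum.cong refl)
        fix z :: "nat \<Rightarrow> 'a" assume z: "z \<in> vecs B"
        define a1 where "a1 = ecss_amp n G01 G1 GE 0 (x + z)"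
        define b1 where "b1 = ecss_amp n G01 G1 GE d1 (x + z)"
        define a2 where "a2 = ecss_amp n G01 G1 GE 0 (y + z)"
        define b2 where "b2 = ecss_amp n G01 G1 GE d1 (y + z)"
        have z1: "a1 * cnj b2 = 0" using clash[of x y z] True by (auto simp: a1_def b2_def amp_char)
        have z2: "b1 * cnj a2 = 0" using clash[of y x z] True by (auto simp: a2_def b1_def amp_char)
        have "(h * a1 + 1 * h * b1) * cnj (h * a2 + 1 * h * b2) - (h * a1 + - 1 * h * b1) * cnj (h * a2 + - 1 * h * b2)
            = 2 * h * cnj h * (a1 * cnj b2 + b1 * cnj a2)"
          by (simp add: algebra_simps)
        then show "(h * a1 + 1 * h * b1) * cnj (h * a2 + 1 * h * b2) = (h * a1 + - 1 * h * b1) * cnj (h * a2 + - 1 * h * b2)"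
          using z1 z2 by simp
      qed
  have kreq: "kraus_apply A Ks' (reduced_state (n + e) A (ecss_encode n G01 G1 GE (psi 1))) s t
      = kraus_apply A Ks' (reduced_state (n + e) A (ecss_encode n G01 G1 GE (psi (-1)))) s t" for Ks' s t
    unfolding kraus_apply_def using req by (intro sum.cong refl) auto
  obtain Ks where Ks: "\<forall>psi. (\<Sum>s\<in>vecs {..<k}. (cmod (psi s))\<^sup>2) = 1 \<longrightarrow>
           (\<forall>s\<in>vecs {..<k}. \<forall>t\<in>vecs {..<k}.
              kraus_apply A Ks (reduced_state (n + e) A (ecss_encode n G01 G1 GE psi)) s t
                = psi s * cnj (psi t))"
    using auth unfolding ecss_authorized_def A_def by blast
  have "psi 1 0 * cnj (psi 1 d1) = psi (-1) 0 * cnj (psi (-1) d1)"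
    using Ks[rule_format, OF nrm[of 1], of 0 d1] Ks[rule_format, OF nrm[of "-1"], of 0 d1] kreq d(1)
    by (simp add: vecs_zero)
  then have "h * cnj h = - (h * cnj h)" using d10 by (simp add: psi_def)
  then show False using h0 by simp
qed

end



lemma lincomb_uminus: "lincomb G (- a) = - lincomb G a"
  by (simp add: lincomb_def fun_eq_iff sum_negf)

lemma lc_add: "linear_code n L \<Longrightarrow> a \<in> L \<Longrightarrow> b \<in> L \<Longrightarrow> a + b \<in> L"
  by (simp add: linear_code_def vadd_eq)
lemma lc_scale: "linear_code n L \<Longrightarrow> a \<in> L \<Longrightarrow> (\<lambda>i. c * a i) \<in> L"
  by (simp add: linear_code_def)

lemma hwt_le_card: "finite B \<Longrightarrow> (\<forall>i<n. i \<notin> B \<longrightarrow> v i = 0) \<Longrightarrow> hwt n v \<le> card B"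
  unfolding hwt_def by (rule card_mono) auto

lemma hwt_le_n: "hwt n v \<le> n"
proof -
  have "hwt n v \<le> card {..<n}" unfolding hwt_def by (rule card_mono) auto
  then show ?thesis by simp
qed

lemma sum_restrict_B:
  fixes u g :: "nat \<Rightarrow> 'a::field"
  assumes "u \<in> vecs B" "B \<subseteq> {..<n}"
  shows "(\<Sum>i<n. u i * g i) = (\<Sum>i\<in>B. u i * restr B g i)"
proof -
  have "(\<Sum>i<n. u i * g i) = (\<Sum>i\<in>B. u i * g i)"
    using assms by (intro sum.mono_neutral_right) (auto simp: vecs_def)
  also have "\<dots> = (\<Sum>i\<in>B. u i * restr B g i)" by (intro sum.cong) (auto simp: restr_def)
  finally show ?thesis .
qed

context ecss
begin

lemma E_add: "a \<in> row_space GE \<Longrightarrow> b \<in> row_space GE \<Longrightarrow> a + b \<in> row_space GE"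
proof -
  assume "a \<in> row_space GE" "b \<in> row_space GE"
  then obtain ca cb where c: "ca \<in> vecs {..<e}" "a = lincomb GE ca" "cb \<in> vecs {..<e}" "b = lincomb GE cb"
    unfolding row_space_def by blast
  then have "a + b = lincomb GE (ca + cb)" by (simp add: lincomb_add)
  moreover have "ca + cb \<in> vecs {..<e}" using c by (simp add: vecs_add)
  ultimately show ?thesis unfolding row_space_def by (rule image_eqI)
qed

lemma E_scale: "a \<in> row_space GE \<Longrightarrow> (\<lambda>i. c * a i) \<in> row_space GE"
proof -
  assume "a \<in> row_space GE"
  then obtain ca where ca: "ca \<in> vecs {..<e}" "a = lincomb GE ca" by (auto simp: row_space_def)
  have "(\<lambda>i. c * a i) = lincomb GE (\<lambda>i. c * ca i)" using ca(2) by (simp add: lincomb_scale)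
  moreover have "(\<lambda>i. c * ca i) \<in> vecs {..<e}" using ca(1) by (simp add: vecs_def)
  ultimately show ?thesis by (auto simp: row_space_def)
qed

lemma CS_add:
  assumes "linear_code n L" "a \<in> code_sum L (row_space GE)" "b \<in> code_sum L (row_space GE)"
  shows "a + b \<in> code_sum L (row_space GE)"
proof -
  obtain a1 a2 where "a1 \<in> L" "a2 \<in> row_space GE" "a = a1 + a2" using assms(2) by (auto simp: code_sum_def vadd_eq)
  moreover obtain b1 b2 where "b1 \<in> L" "b2 \<in> row_space GE" "b = b1 + b2" using assms(3) by (auto simp: code_sum_def vadd_eq)
  ultimately have "a + b = (a1 + b1) + (a2 + b2)" "a1 + b1 \<in> L" "a2 + b2 \<in> row_space GE"
    using lc_add[OF assms(1)] E_add by (auto simp: algebra_simps)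
  then show ?thesis unfolding code_sum_def vadd_eq by blast
qed

lemma CS_scale:
  assumes "linear_code n L" "a \<in> code_sum L (row_space GE)"
  shows "(\<lambda>i. c * a i) \<in> code_sum L (row_space GE)"
proof -
  obtain a1 a2 where "a1 \<in> L" "a2 \<in> row_space GE" "a = a1 + a2" using assms(2) by (auto simp: code_sum_def vadd_eq)
  then have "(\<lambda>i. c * a i) = (\<lambda>i. c * a1 i) + (\<lambda>i. c * a2 i)" "(\<lambda>i. c * a1 i) \<in> L" "(\<lambda>i. c * a2 i) \<in> row_space GE"
    using lc_scale[OF assms(1)] E_scale by (auto simp: fun_eq_iff distrib_left)
  then show ?thesis unfolding code_sum_def vadd_eq by blast
qed

lemma CS_zero: "linear_code n L \<Longrightarrow> 0 \<in> code_sum L (row_space GE)"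
proof -
  assume "linear_code n L"
  then have "(0::nat \<Rightarrow> 'a) \<in> L" by (simp add: linear_code_def zerov_eq)
  moreover have "(0::nat \<Rightarrow> 'a) \<in> row_space GE" using E_zero by (simp add: zerov_eq)
  moreover have "(0::nat \<Rightarrow> 'a) = 0 + 0" by simp
  ultimately show ?thesis unfolding code_sum_def vadd_eq by blast
qed

lemma CS_v: "linear_code n L \<Longrightarrow> code_sum L (row_space GE) \<subseteq> vecs {..<n}"
  using GE_v unfolding code_sum_def linear_code_def vadd_eq row_space_def by (auto intro!: vecs_add)

lemma CS_F1: "g \<in> code_sum F1 (row_space GE) \<Longrightarrow> \<exists>r1\<in>vecs {..<f}. \<exists>r2\<in>vecs {..<e}. g = lincomb G1 r1 + lincomb GE r2"
proof -
  assume "g \<in> code_sum F1 (row_space GE)"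
  then obtain g1 g2 where g: "g1 \<in> F1" "g2 \<in> row_space GE" "g = g1 + g2"
    unfolding code_sum_def vadd_eq by blast
  obtain r1 where r1: "r1 \<in> vecs {..<f}" "g1 = lincomb G1 r1"
    using g(1) gm1 unfolding generator_matrix_def row_space_def by blast
  obtain r2 where r2: "r2 \<in> vecs {..<e}" "g2 = lincomb GE r2"
    using g(2) unfolding row_space_def by blast
  show ?thesis using g(3) r1 r2 by blast
qed

end

theorem corollary1:
  fixes F0 F1 :: "(nat \<Rightarrow> 'a::{finite,field}) set"
    and G01 G1 GE :: "(nat \<Rightarrow> 'a) list"
    and n \<tau> :: nat
  assumes "linear_code n F0" and "linear_code n F1" and "F1 \<subset> F0"
    and "generator_matrix G1 F1"
    and "generator_matrix (G01 @ G1) F0"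
    and "set GE \<subseteq> vecs {..<n}"
    and "F0 \<inter> row_space GE = {zerov}"
  shows "(\<forall>J. J \<subseteq> {..<n} \<and> card J = \<tau> \<longrightarrow>
            ecss_authorized n G01 G1 GE (J \<union> {n..<n + length GE}))
         \<longleftrightarrow> \<tau> \<ge> tau_e n F0 F1 (row_space GE)"
proof -
  interpret ecss n G01 G1 GE F0 F1 using assms by unfold_locales
  define D1 where "D1 = F0 - F1"
  define D2 where "D2 = dual n (code_sum F1 (row_space GE)) - dual n (code_sum F0 (row_space GE))"
  define w1 where "w1 = wt_diff n F0 F1"
  define w2 where "w2 = wt_diff n (dual n (code_sum F1 (row_space GE))) (dual n (code_sum F0 (row_space GE)))"
  define m where "m = min w1 w2"
  have te: "tau_e n F0 F1 (row_space GE) = n + 1 - m" by (simp add: tau_e_def m_def w1_def w2_def)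
  have finVn: "finite (vecs {..<n} :: (nat \<Rightarrow> 'a) set)" by (simp add: finite_vecs)
  have "D1 \<subseteq> vecs {..<n}" using F0v by (auto simp: D1_def)
  then have finD1: "finite D1" using finVn by (rule finite_subset)
  have "D2 \<subseteq> vecs {..<n}" by (auto simp: D2_def dual_def)
  then have finD2: "finite D2" using finVn by (rule finite_subset)
  have neD1: "D1 \<noteq> {}" using sub by (auto simp: D1_def)
  obtain a where a: "a \<in> F0" "a \<notin> F1" using sub by blast
  have aV: "a \<notin> code_sum F1 (row_space GE)"
  proof
    assume "a \<in> code_sum F1 (row_space GE)"
    then obtain g1 g2 where g: "g1 \<in> F1" "g2 \<in> row_space GE" "a = g1 + g2" by (auto simp: code_sum_def vadd_eq)
    have eq: "g2 = a + (\<lambda>i. (-1) * g1 i)" using g(3) by (simp add: fun_eq_iff)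
    have "g1 \<in> F0" using g(1) F1_sub_F0 by blast
    then have "(\<lambda>i. (-1) * g1 i) \<in> F0" by (rule lc_scale[OF lc0])
    then have "a + (\<lambda>i. (-1) * g1 i) \<in> F0" by (rule lc_add[OF lc0 a(1)])
    then have "g2 \<in> F0" by (simp only: eq)
    then have "g2 = 0" using inter g(2) by (auto simp: zerov_eq)
    then show False using g a(2) by simp
  qed
  obtain u0 where u0: "u0 \<in> vecs {..<n}" "\<forall>g\<in>code_sum F1 (row_space GE). (\<Sum>i\<in>{..<n}. u0 i * g i) = 0"
    "(\<Sum>i\<in>{..<n}. u0 i * a i) \<noteq> 0"
  proof -
    have c1: "\<forall>x\<in>code_sum F1 (row_space GE). \<forall>y\<in>code_sum F1 (row_space GE). x + y \<in> code_sum F1 (row_space GE)"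
      using CS_add[OF lc1] by blast
    have c2: "\<forall>c. \<forall>x\<in>code_sum F1 (row_space GE). (\<lambda>i. c * x i) \<in> code_sum F1 (row_space GE)"
      using CS_scale[OF lc1] by blast
    have av: "a \<in> vecs {..<n}" using a(1) F0v by blast
    show ?thesis using separation[OF finite_lessThan CS_v[OF lc1] CS_zero[OF lc1] c1 c2 av aV] that by blast
  qed
  have "a + 0 \<in> code_sum F0 (row_space GE)" using a(1) E_zero unfolding code_sum_def vadd_eq zerov_eq by blast
  then have "u0 \<in> D2" using u0 by (auto simp: D2_def dual_def)
  then have neD2: "D2 \<noteq> {}" by blast
  have w1_le: "w1 \<le> hwt n v" if "v \<in> D1" for v
    unfolding w1_def wt_diff_def D1_def[symmetric] using finD1 that by simp
  have w2_le: "w2 \<le> hwt n v" if "v \<in> D2" for v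
    unfolding w2_def wt_diff_def D2_def[symmetric] using finD2 that by simp
  have w1_in: "w1 \<in> hwt n ` D1"
    unfolding w1_def wt_diff_def D1_def[symmetric] using finD1 neD1 by (intro Min_in) auto
  have w2_in: "w2 \<in> hwt n ` D2"
    unfolding w2_def wt_diff_def D2_def[symmetric] using finD2 neD2 by (intro Min_in) auto
  have mn: "m \<le> n" using w1_in hwt_le_n by (auto simp: m_def min_le_iff_disj)
  show ?thesis
  proof
    assume L: "\<forall>J. J \<subseteq> {..<n} \<and> card J = \<tau> \<longrightarrow> ecss_authorized n G01 G1 GE (J \<union> {n..<n + length GE})"
    show "\<tau> \<ge> tau_e n F0 F1 (row_space GE)"
    proof (rule ccontr)
      assume "\<not> \<tau> \<ge> tau_e n F0 F1 (row_space GE)"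
      then have tm: "\<tau> + m \<le> n" using te by simp
      obtain v where v: "v \<in> D1 \<and> hwt n v = m \<or> v \<in> D2 \<and> hwt n v = m"
        using w1_in w2_in unfolding m_def min_def by (cases "w1 \<le> w2") auto
      define S where "S = {i. i < n \<and> v i \<noteq> 0}"
      have S: "S \<subseteq> {..<n}" "card S = m" using v by (auto simp: S_def hwt_def)
      have "card ({..<n} - S) = n - m" using S by (simp add: card_Diff_subset finite_subset)
      then have le: "\<tau> \<le> card ({..<n} - S)" using tm by simp
      obtain J where J: "J \<subseteq> {..<n} - S" "card J = \<tau>" using obtain_subset_with_card_n[OF le] by blast
      have J1: "J \<subseteq> {..<n}" using J by blast
      have vJ: "\<forall>i\<in>J. v i = 0" using J(1) by (auto simp: S_def)
      have auth: "ecss_authorized n G01 G1 GE (J \<union> {n..<n + length GE})" using L J1 J(2) by blast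
      show False
      proof (cases "v \<in> D1")
        case True
        then show False using nec_X[OF J1 _ _ vJ] auth by (auto simp: D1_def)
      next
        case False
        then have "v \<in> D2" using v by blast
        then show False using nec_Z[OF J1 _ _ vJ] auth by (auto simp: D2_def)
      qed
    qed
  next
    assume R: "\<tau> \<ge> tau_e n F0 F1 (row_space GE)"
    then have nt: "n < \<tau> + m" using te mn by simp
    show "\<forall>J. J \<subseteq> {..<n} \<and> card J = \<tau> \<longrightarrow> ecss_authorized n G01 G1 GE (J \<union> {n..<n + length GE})"
    proof (intro allI impI)
      fix J assume J: "J \<subseteq> {..<n} \<and> card J = \<tau>"
      define B where "B = {..<n} - J"
      have finB: "finite B" by (simp add: B_def)
      have Bn: "B \<subseteq> {..<n}" by (auto simp: B_def)
      have finJ: "finite J" using J finite_subset by blast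
      have "card B = n - \<tau>" using J finJ by (simp add: B_def card_Diff_subset)
      moreover have "\<tau> \<le> n" using J card_mono[of "{..<n}" J] by simp
      ultimately have cardB: "card B < m" using nt by simp
      have X: "\<forall>c\<in>F0. (\<forall>i\<in>J. c i = 0) \<longrightarrow> c \<in> F1"
      proof (intro ballI impI)
        fix c :: "nat \<Rightarrow> 'a" assume c: "c \<in> F0" "\<forall>i\<in>J. c i = 0"
        show "c \<in> F1"
        proof (rule ccontr)
          assume "c \<notin> F1"
          then have "c \<in> D1" using c by (simp add: D1_def)
          then have "w1 \<le> hwt n c" by (rule w1_le)
          moreover have "hwt n c \<le> card B" using c(2) finB by (intro hwt_le_card) (auto simp: B_def)
          ultimately show False using cardB by (simp add: m_def)
        qed
      qed
      have Z: "\<forall>s\<in>vecs {..<k}. \<exists>r1\<in>vecs {..<f}. \<exists>r2\<in>vecs {..<e}. \<forall>i\<in>{..<n}-J. word s r1 r2 i = 0"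
      proof
        fix s :: "nat \<Rightarrow> 'a" assume s: "s \<in> vecs {..<k}"
        define V where "V = restr B ` code_sum F1 (row_space GE)"
        define v where "v = restr B (lincomb G01 s)"
        show "\<exists>r1\<in>vecs {..<f}. \<exists>r2\<in>vecs {..<e}. \<forall>i\<in>{..<n}-J. word s r1 r2 i = 0"
        proof (cases "v \<in> V")
          case True
          then obtain g where g: "g \<in> code_sum F1 (row_space GE)" "v = restr B g" by (auto simp: V_def)
          obtain r1 r2 where r: "r1 \<in> vecs {..<f}" "r2 \<in> vecs {..<e}" "g = lincomb G1 r1 + lincomb GE r2"
            using CS_F1[OF g(1)] by blast
          have "\<forall>i\<in>{..<n}-J. word s (0 - r1) (0 - r2) i = 0"
          proof
            fix i assume i: "i \<in> {..<n}-J"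
            then have "v i = g i" using g(2) by (simp add: restr_def B_def)
            moreover have "v i = lincomb G01 s i" using i by (simp add: v_def restr_def B_def)
            ultimately show "word s (0 - r1) (0 - r2) i = 0" using i r(3)
              by (simp add: ecss_word_def lincomb_diff lincomb_zero lincomb_uminus)
          qed
          moreover have "0 - r1 \<in> vecs {..<f}" "0 - r2 \<in> vecs {..<e}" using r vecs_diff[OF vecs_zero] by blast+
          ultimately show ?thesis by blast
        next
          case False
          have VB: "V \<subseteq> vecs B" by (auto simp: V_def restr_vecs)
          have V0: "0 \<in> V"
          proof -
            have "restr B 0 = (0 :: nat \<Rightarrow> 'a)" by (simp add: restr_def fun_eq_iff)
            then show ?thesis using CS_zero[OF lc1] unfolding V_def by (metis image_eqI)
          qed
          have Vadd: "\<forall>x\<in>V. \<forall>y\<in>V. x + y \<in> V"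
          proof (intro ballI)
            fix x y :: "nat \<Rightarrow> 'a" assume "x \<in> V" "y \<in> V"
            then obtain gx gy where gg: "gx \<in> code_sum F1 (row_space GE)" "gy \<in> code_sum F1 (row_space GE)"
              "x = restr B gx" "y = restr B gy" by (auto simp: V_def)
            have "gx + gy \<in> code_sum F1 (row_space GE)" using CS_add[OF lc1 gg(1,2)] .
            then have "restr B (gx + gy) \<in> V" unfolding V_def by (rule imageI)
            moreover have eq: "x + y = restr B (gx + gy)" using gg(3,4) by (simp add: restr_add)
            ultimately show "x + y \<in> V" by (simp only: eq)
          qed
          have Vsc: "\<forall>c. \<forall>x\<in>V. (\<lambda>i. c * x i) \<in> V"
          proof (intro allI ballI)
            fix c :: 'a and x :: "nat \<Rightarrow> 'a" assume "x \<in> V"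
            then obtain gx where gx: "gx \<in> code_sum F1 (row_space GE)" "x = restr B gx" by (auto simp: V_def)
            have "(\<lambda>i. c * x i) = restr B (\<lambda>i. c * gx i)" using gx(2) by (simp add: restr_def fun_eq_iff)
            then show "(\<lambda>i. c * x i) \<in> V" unfolding V_def using CS_scale[OF lc1 gx(1)] by blast
          qed
          have vB: "v \<in> vecs B" by (simp add: v_def restr_vecs)
          obtain u where u: "u \<in> vecs B" "\<forall>x\<in>V. (\<Sum>i\<in>B. u i * x i) = 0" "(\<Sum>i\<in>B. u i * v i) \<noteq> 0"
            using separation[OF finB VB V0 Vadd Vsc vB False] by blast
          have uD2: "u \<in> D2"
          proof -
            have un: "u \<in> vecs {..<n}" using u(1) Bn by (rule vecs_mono)
            have "\<forall>g\<in>code_sum F1 (row_space GE). (\<Sum>i<n. u i * g i) = 0"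
              using u(1,2) Bn by (auto simp: sum_restrict_B V_def)
            then have d1: "u \<in> dual n (code_sum F1 (row_space GE))" using un by (simp add: dual_def)
            have "lincomb G01 s + 0 \<in> code_sum F0 (row_space GE)"
              using G01_in E_zero unfolding code_sum_def vadd_eq zerov_eq by blast
            moreover have "(\<Sum>i<n. u i * (lincomb G01 s + 0) i) \<noteq> 0"
              using u(1,3) Bn by (simp add: sum_restrict_B v_def)
            ultimately have "u \<notin> dual n (code_sum F0 (row_space GE))" by (auto simp: dual_def)
            then show ?thesis using d1 by (simp add: D2_def)
          qed
          then have "w2 \<le> hwt n u" by (rule w2_le)
          moreover have "hwt n u \<le> card B" using u(1) finB by (intro hwt_le_card) (auto simp: vecs_def)
          ultimately show ?thesis using cardB by (simp add: m_def)
        qed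
      qed
      show "ecss_authorized n G01 G1 GE (J \<union> {n..<n + length GE})"
        using suff[of J] J X Z by blast
    qed
  qed
qed

end
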